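(* Let $f$ be a non-negative multiplicative arithmetic function. Suppose there exist constants $\tau>0$, $C_-$ and $C_+$ such that $$C_-\le\sum_{n\le x}\frac{\Lambda_f(n)}{n}-\tau\log x\le C_+\quad\text{for every real }x\ge1.$$ Then for every $x>\exp(C_+)$, $$\frac{C_f}{\tau}\log^\tau x\,\frac{\left(1-\frac{C_+}{\log x}\right)^{\tau+1}}{1-\frac{C_-}{\log x}}\le\mu_f(x)\le\frac{C_f}{\tau}\log^\tau x\,\frac{\left(1-\frac{C_-}{\log x}\right)^{\tau+1}}{1-\frac{C_+}{\log x}},$$ where $C_f:=\frac1{\Gamma(\tau)}\lim_{s\to1+0}(s-1)^\tau L_f(s)$.
   Context: For a multiplicative $f$ (so $f(1)=1$): $L_f(s)=\sum_{n\ge1}f(n)n^{-s}$; $\mu_f(x)=\sum_{n\le x}f(n)/n$; $\Lambda_f$ is defined by $f(n)\log n=\sum_{d\mid n}f(d)\Lambda_f(n/d)$ for all $n\ge1$ (equivalently $-L_f'/L_f=\sum_n\Lambda_f(n)n^{-s}$ as formal Dirichlet series). $\Gamma$ is the gamma function. *)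

theory Defs
  imports "HOL-Analysis.Analysis"
begin

text \<open>Multiplicative arithmetic function (values at 0 are irrelevant).\<close>
definition multiplicative_fn :: "(nat \<Rightarrow> real) \<Rightarrow> bool" where
  "multiplicative_fn f \<longleftrightarrow> f 1 = 1 \<and> (\<forall>m n. coprime m n \<longrightarrow> f (m * n) = f m * f n)"

definition Lambda_f :: "(nat \<Rightarrow> real) \<Rightarrow> nat \<Rightarrow> real" where
  "Lambda_f f = (THE g. g 0 = 0 \<and>
      (\<forall>n\<ge>1. f n * ln (real n) = (\<Sum>d\<in>{d. d dvd n}. f d * g (n div d))))"

text \<open>L_f(s) = sum_{n>=1} f(n) n^{-s} (the n = 0 term is 0).\<close>
definition L_f :: "(nat \<Rightarrow> real) \<Rightarrow> real \<Rightarrow> real" where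
  "L_f f s = (\<Sum>n. f n / real n powr s)"

definition mu_f :: "(nat \<Rightarrow> real) \<Rightarrow> real \<Rightarrow> real" where
  "mu_f f x = (\<Sum>n\<in>{1..nat \<lfloor>x\<rfloor>}. f n / real n)"

definition C_f :: "(nat \<Rightarrow> real) \<Rightarrow> real \<Rightarrow> real" where
  "C_f f \<tau> = Lim (at_right 1) (\<lambda>s. (s - 1) powr \<tau> * L_f f s) / Gamma \<tau>"

end

theory Submission
  imports Defs
begin

lemma gamma_shift:
  fixes p \<sigma> c :: real assumes p: "p > -1" and s: "\<sigma> > 0"
  shows "((\<lambda>v. if c \<le> v then (v - c) powr p * exp (-\<sigma> * v) else 0) has_integral
          (exp(-\<sigma>*c) * Gamma(p+1) / \<sigma> powr (p+1))) UNIV"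
proof -
  define g where "g t = (if t \<in> {0..} then t powr (p + 1 - 1) / exp t else 0)" for t :: real
  have "((\<lambda>t. t powr (p + 1 - 1) / exp t) has_integral Gamma (p+1)) {0..}"
    using Gamma_integral_real[of "p+1"] p by simp
  hence g_int: "(g has_integral Gamma(p+1)) UNIV"
    unfolding g_def by (subst has_integral_restrict_UNIV)
  have g0: "\<And>t. 0 \<le> g t" by (simp add: g_def)
  have G0: "Gamma (p+1) > 0" using p by simp
  from g_int have gm: "g \<in> borel_measurable lebesgue" and gn: "(\<integral>\<^sup>+x. ennreal (g x) \<partial>lebesgue) = ennreal (Gamma(p+1))"
    using has_integral_iff_nn_integral_lebesgue[of g, OF g0] by auto
  define t where "t = -\<sigma>*c"
  define k where "k = exp(-\<sigma>*c) / \<sigma> powr p"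
  have k0: "k \<ge> 0" by (simp add: k_def)
  define F where "F v = (if c \<le> v then (v - c) powr p * exp (-\<sigma> * v) else 0)" for v
  have F_eq: "F v = k * g (t + \<sigma> * v)" for v
  proof (cases "c \<le> v")
    case True
    have "g (t + \<sigma> * v) = (\<sigma> * (v - c)) powr p / exp (\<sigma> * (v - c))"
      using True s by (simp add: g_def t_def algebra_simps)
    also have "\<dots> = \<sigma> powr p * (v - c) powr p / exp (\<sigma> * (v - c))"
      using True s by (simp add: powr_mult)
    finally show ?thesis using True s
      by (simp add: F_def k_def exp_diff exp_minus algebra_simps field_simps right_diff_distrib exp_add)
  next
    case False
    then have "t + \<sigma> * v < 0" using s by (simp add: t_def algebra_simps)
    then show ?thesis using False by (simp add: F_def g_def)
  qed
  have gm': "(\<lambda>x. ennreal (g x)) \<in> borel_measurable lebesgue" using gm by measurable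
  have gam: "(\<lambda>x. g (t + \<sigma> *\<^sub>R x)) \<in> borel_measurable lebesgue"
    using borel_measurable_affine[OF gm, of \<sigma> t] s by simp
  have Fm: "F \<in> borel_measurable lebesgue"
    unfolding F_eq using gam by simp
  have aff: "(\<integral>\<^sup>+x. ennreal (g x) \<partial>lebesgue) = ennreal \<bar>\<sigma>\<bar> * (\<integral>\<^sup>+x. ennreal (g (t + \<sigma> * x)) \<partial>lebesgue)"
    using nn_integral_real_affine_lebesgue[OF gm', of \<sigma> t] s by simp
  have X: "(\<integral>\<^sup>+x. ennreal (g (t + \<sigma> * x)) \<partial>lebesgue) = ennreal (Gamma (p+1) / \<sigma>)"
  proof -
    have "ennreal \<sigma> * (\<integral>\<^sup>+x. ennreal (g (t + \<sigma> * x)) \<partial>lebesgue) = ennreal (Gamma(p+1))"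
      using aff gn s by simp
    hence "ennreal (1/\<sigma>) * (ennreal \<sigma> * (\<integral>\<^sup>+x. ennreal (g (t + \<sigma> * x)) \<partial>lebesgue)) = ennreal (1/\<sigma>) * ennreal (Gamma(p+1))"
      by simp
    moreover have "ennreal (1/\<sigma>) * ennreal \<sigma> = 1" using s
      by (simp add: ennreal_mult[symmetric])
    ultimately show ?thesis using s G0
      by (simp add: mult.assoc[symmetric] ennreal_mult[symmetric] divide_simps)
  qed
  have "(\<integral>\<^sup>+x. ennreal (F x) \<partial>lebesgue) = (\<integral>\<^sup>+x. ennreal k * ennreal (g (t + \<sigma> * x)) \<partial>lebesgue)"
    unfolding F_eq using k0 g0 by (simp add: ennreal_mult)
  also have "\<dots> = ennreal k * ennreal (Gamma (p+1) / \<sigma>)"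
    using gam X by (subst nn_integral_cmult) auto
  also have "\<dots> = ennreal (exp(-\<sigma>*c) * Gamma(p+1) / \<sigma> powr (p+1))"
    using k0 s G0 by (simp add: ennreal_mult[symmetric] k_def powr_add)
  finally have nn: "(\<integral>\<^sup>+x. ennreal (F x) \<partial>lebesgue) = ennreal (exp(-\<sigma>*c) * Gamma(p+1) / \<sigma> powr (p+1))" .
  have F0: "\<And>v. 0 \<le> F v" by (simp add: F_def)
  have "(F has_integral (exp(-\<sigma>*c) * Gamma(p+1) / \<sigma> powr (p+1))) UNIV"
    using has_integral_iff_nn_integral_lebesgue[of F, OF F0] Fm nn p s by auto
  thus ?thesis unfolding F_def .
qed


function lamrec :: "(nat \<Rightarrow> real) \<Rightarrow> nat \<Rightarrow> real" where
  "lamrec f n = (if n = 0 then 0 else f n * ln (real n) -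
     (\<Sum>d\<in>{d. d dvd n \<and> d \<noteq> 1}. f d * lamrec f (n div d)))"
  by auto
termination
proof (relation "Wellfounded.measure (\<lambda>(f,n). n)")
  fix f :: "nat \<Rightarrow> real" and n x :: nat
  assume "\<not> n = 0" "x \<in> {d. d dvd n \<and> d \<noteq> 1}"
  then have "x > 1" "n > 0" by (auto intro: Nat.gr0I)
  then show "((f, n div x), f, n) \<in> Wellfounded.measure (\<lambda>(f, n). n)" by simp
qed auto

declare lamrec.simps[simp del]

lemma divisors_split:
  assumes "n \<ge> (1::nat)"
  shows "{d. d dvd n} = insert 1 {d. d dvd n \<and> d \<noteq> 1}" "finite {d. d dvd n \<and> d \<noteq> 1}"
    "1 \<notin> {d. d dvd n \<and> d \<noteq> 1}"
  using assms by auto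

lemma lamrec_prop:
  assumes f1: "f 1 = 1" and n: "n \<ge> 1"
  shows "f n * ln (real n) = (\<Sum>d\<in>{d. d dvd n}. f d * lamrec f (n div d))"
proof -
  have "(\<Sum>d\<in>{d. d dvd n}. f d * lamrec f (n div d)) =
        f 1 * lamrec f n + (\<Sum>d\<in>{d. d dvd n \<and> d \<noteq> 1}. f d * lamrec f (n div d))"
    using divisors_split[OF n] by (simp add: sum.insert)
  also have "lamrec f n = f n * ln (real n) - (\<Sum>d\<in>{d. d dvd n \<and> d \<noteq> 1}. f d * lamrec f (n div d))"
    using n by (subst lamrec.simps) simp
  finally show ?thesis using f1 by simp
qed

lemma lam_unique:
  assumes f1: "f 1 = 1"
    and g1: "g1 0 = 0" "\<forall>n\<ge>1. f n * ln (real n) = (\<Sum>d\<in>{d. d dvd n}. f d * g1 (n div d))"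
    and g2: "g2 0 = 0" "\<forall>n\<ge>1. f n * ln (real n) = (\<Sum>d\<in>{d. d dvd n}. f d * g2 (n div d))"
  shows "g1 n = g2 n"
proof (induction n rule: less_induct)
  case (less n)
  show ?case
  proof (cases "n = 0")
    case True then show ?thesis using g1 g2 by simp
  next
    case False
    then have n: "n \<ge> 1" by simp
    have e: "(\<Sum>d\<in>{d. d dvd n}. f d * g (n div d)) =
        g n + (\<Sum>d\<in>{d. d dvd n \<and> d \<noteq> 1}. f d * g (n div d))" for g :: "nat \<Rightarrow> real"
      using divisors_split[OF n] f1 by (simp add: sum.insert)
    have "(\<Sum>d\<in>{d. d dvd n \<and> d \<noteq> 1}. f d * g1 (n div d)) = (\<Sum>d\<in>{d. d dvd n \<and> d \<noteq> 1}. f d * g2 (n div d))"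
    proof (rule sum.cong[OF refl])
      fix d assume "d \<in> {d. d dvd n \<and> d \<noteq> 1}"
      then have "d > 1" using n by (auto intro: Nat.gr0I)
      then have "n div d < n" using n by simp
      then show "f d * g1 (n div d) = f d * g2 (n div d)" using less by simp
    qed
    moreover have "f n * ln (real n) = (\<Sum>d\<in>{d. d dvd n}. f d * g1 (n div d))"
      using g1(2) n by blast
    moreover have "f n * ln (real n) = (\<Sum>d\<in>{d. d dvd n}. f d * g2 (n div d))"
      using g2(2) n by blast
    ultimately show ?thesis unfolding e by linarith
  qed
qed

lemma Lambda_f_prop:
  assumes f1: "f 1 = 1" and n: "n \<ge> 1"
  shows "f n * ln (real n) = (\<Sum>d\<in>{d. d dvd n}. f d * Lambda_f f (n div d))"
proof -
  let ?P = "\<lambda>g. g 0 = 0 \<and> (\<forall>n\<ge>1. f n * ln (real n) = (\<Sum>d\<in>{d. d dvd n}. f d * g (n div d)))"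
  have ex: "?P (lamrec f)" using lamrec_prop[of f, OF f1] by (simp add: lamrec.simps[of f 0])
  have "\<exists>!g. ?P g"
  proof (rule ex1I[of _ "lamrec f"])
    show "?P (lamrec f)" by (rule ex)
    fix g assume "?P g"
    then show "g = lamrec f"
    proof (intro ext)
      fix n show "g n = lamrec f n" using lam_unique[of f g "lamrec f" n] f1 ex \<open>?P g\<close> by blast
    qed
  qed
  then have "?P (Lambda_f f)" unfolding Lambda_f_def by (rule theI')
  then show ?thesis using n by blast
qed

lemma Lambda_f_1:
  assumes f1: "f 1 = 1" shows "Lambda_f f 1 = 0"
  using Lambda_f_prop[of f 1, OF f1] f1 by simp

lemma nat_floor_div:
  assumes "x \<ge> 0" "d \<ge> (1::nat)"
  shows "nat \<lfloor>x / real d\<rfloor> = nat \<lfloor>x\<rfloor> div d"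
proof -
  have "\<lfloor>x / real_of_int (int d)\<rfloor> = \<lfloor>x\<rfloor> div int d"
    by (rule floor_divide_real_eq_div) simp
  then have "\<lfloor>x / real d\<rfloor> = \<lfloor>x\<rfloor> div int d" by simp
  then show ?thesis using assms by (simp add: nat_div_distrib)
qed

lemma convolution:
  assumes f1: "f 1 = 1"
  shows "(\<Sum>n\<in>{1..N}. f n * ln (real n) / real n) =
         (\<Sum>d\<in>{1..N}. f d / real d * (\<Sum>m\<in>{1..N div d}. Lambda_f f m / real m))"
proof -
  let ?L = "Lambda_f f"
  have "(\<Sum>n\<in>{1..N}. f n * ln (real n) / real n) =
        (\<Sum>n\<in>{1..N}. \<Sum>d\<in>{d. d dvd n}. f d * ?L (n div d) / real n)"
  proof (rule sum.cong[OF refl])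
    fix n assume "n \<in> {1..N}"
    then have "f n * ln (real n) = (\<Sum>d\<in>{d. d dvd n}. f d * ?L (n div d))"
      using Lambda_f_prop[of f n, OF f1] by simp
    then show "f n * ln (real n) / real n = (\<Sum>d\<in>{d. d dvd n}. f d * ?L (n div d) / real n)"
      by (simp add: sum_divide_distrib)
  qed
  also have "\<dots> = (\<Sum>(n,d)\<in>Sigma {1..N} (\<lambda>n. {d. d dvd n}). f d * ?L (n div d) / real n)"
    by (rule sum.Sigma) auto
  also have "\<dots> = (\<Sum>(d,m)\<in>Sigma {1..N} (\<lambda>d. {1..N div d}). f d / real d * (?L m / real m))"
  proof (rule sum.reindex_bij_witness[where i = "\<lambda>(d,m). (d*m, d)" and j = "\<lambda>(n,d). (d, n div d)"])
    fix a assume "a \<in> Sigma {1..N} (\<lambda>n. {d. d dvd n})"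
    then obtain n d where a: "a = (n,d)" "1 \<le> n" "n \<le> N" "d dvd n" by auto
    then have d1: "d \<ge> 1" by (auto intro: Nat.gr0I)
    show "(case case a of (n, d) \<Rightarrow> (d, n div d) of (d, m) \<Rightarrow> (d * m, d)) = a" using a by simp
    have "n div d \<ge> 1"
    proof -
      obtain k where k: "n = d * k" using a by (auto elim: dvdE)
      then have "k \<ge> 1" using a by (auto intro: Nat.gr0I)
      then show ?thesis using k d1 by simp
    qed
    moreover have "n div d \<le> N div d" using a by (simp add: div_le_mono)
    moreover have "d \<le> N"
    proof -
      have "d \<le> n" using a(2,4) by (intro dvd_imp_le) auto
      then show ?thesis using a(3) by linarith
    qed
    ultimately show "(case a of (n, d) \<Rightarrow> (d, n div d)) \<in> Sigma {1..N} (\<lambda>d. {1..N div d})"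
      using a d1 by auto
    have "d * (n div d) = n" using a(4) by simp
    then have "real n = real d * real (n div d)" by (metis of_nat_mult)
    then show "(case case a of (n, d) \<Rightarrow> (d, n div d) of (d, m) \<Rightarrow> f d / real d * (?L m / real m)) =
          (case a of (n, d) \<Rightarrow> f d * ?L (n div d) / real n)" using a by simp
  next
    fix b assume "b \<in> Sigma {1..N} (\<lambda>d. {1..N div d})"
    then obtain d m where b: "b = (d,m)" "1 \<le> d" "d \<le> N" "1 \<le> m" "m \<le> N div d" by auto
    show "(case case b of (d, m) \<Rightarrow> (d * m, d) of (n, d) \<Rightarrow> (d, n div d)) = b" using b by simp
    have "d * m \<le> d * (N div d)" using b by simp
    also have "\<dots> \<le> N" by (rule times_div_less_eq_dividend)
    finally have "d * m \<le> N" .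
    then show "(case b of (d, m) \<Rightarrow> (d * m, d)) \<in> Sigma {1..N} (\<lambda>n. {d. d dvd n})"
      using b by auto
  qed
  also have "\<dots> = (\<Sum>d\<in>{1..N}. \<Sum>m\<in>{1..N div d}. f d / real d * (?L m / real m))"
    by (rule sum.Sigma[symmetric]) auto
  also have "\<dots> = (\<Sum>d\<in>{1..N}. f d / real d * (\<Sum>m\<in>{1..N div d}. ?L m / real m))"
    by (simp add: sum_distrib_left)
  finally show ?thesis .
qed


lemma le_nat_floor_exp:
  assumes "n \<ge> (1::nat)"
  shows "(n \<le> nat \<lfloor>exp u\<rfloor>) = (ln (real n) \<le> u)"
proof -
  have "(n \<le> nat \<lfloor>exp u\<rfloor>) = (int n \<le> \<lfloor>exp u\<rfloor>)" by (rule le_nat_iff) simp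
  also have "\<dots> = (real n \<le> exp u)" by (simp add: le_floor_iff)
  also have "\<dots> = (ln (real n) \<le> ln (exp u))" using assms by (subst ln_le_cancel_iff) auto
  finally show ?thesis by simp
qed

locale setting =
  fixes f :: "nat \<Rightarrow> real" and \<tau> Cm Cp :: real
  assumes f1: "f 1 = 1" and fnn: "\<And>n. f n \<ge> 0" and tau: "\<tau> > 0"
    and lo: "\<And>x. x \<ge> 1 \<Longrightarrow>
           Cm \<le> (\<Sum>n\<in>{1..nat \<lfloor>x\<rfloor>}. Lambda_f f n / real n) - \<tau> * ln x"
    and hi: "\<And>x. x \<ge> 1 \<Longrightarrow>
           (\<Sum>n\<in>{1..nat \<lfloor>x\<rfloor>}. Lambda_f f n / real n) - \<tau> * ln x \<le> Cp"
begin

definition a :: "nat \<Rightarrow> real" where "a n = f n / real n"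
definition S :: "real \<Rightarrow> real" where "S u = (\<Sum>n\<in>{1..nat \<lfloor>exp u\<rfloor>}. a n)"
definition J :: "real \<Rightarrow> real" where "J u = (\<Sum>n\<in>{1..nat \<lfloor>exp u\<rfloor>}. a n * (u - ln (real n)))"
definition JN :: "nat \<Rightarrow> real \<Rightarrow> real" where "JN N u = (\<Sum>n\<in>{1..N}. a n * max 0 (u - ln (real n)))"

lemma a_nn: "a n \<ge> 0" by (simp add: a_def fnn)
lemma a1: "a 1 = 1" using f1 by (simp add: a_def)

lemma Cm_Cp: "Cm \<le> 0" "0 \<le> Cp"
proof -
  have "(\<Sum>n\<in>{1..nat \<lfloor>1::real\<rfloor>}. Lambda_f f n / real n) = 0"
    using Lambda_f_1[of f, OF f1] by simp
  then show "Cm \<le> 0" "0 \<le> Cp" using lo[of 1] hi[of 1] by simp_all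
qed

lemma K1:
  assumes u: "u \<ge> 0"
  shows "(u - Cp) * S u \<le> (1+\<tau>) * J u" "(1+\<tau>) * J u \<le> (u - Cm) * S u"
proof -
  define x where "x = exp u"
  define N where "N = nat \<lfloor>x\<rfloor>"
  define LS where "LS d = (\<Sum>m\<in>{1..N div d}. Lambda_f f m / real m)" for d
  have x1: "x \<ge> 1" using u by (simp add: x_def)
  have T: "(\<Sum>n\<in>{1..N}. a n * ln (real n)) = (\<Sum>d\<in>{1..N}. a d * LS d)"
    using convolution[of f N, OF f1] by (simp add: a_def LS_def)
  have uSJ: "u * S u - J u = (\<Sum>n\<in>{1..N}. a n * ln (real n))"
    unfolding S_def J_def N_def x_def
    by (simp add: sum_distrib_left sum_subtractf[symmetric] algebra_simps)
  have bnd: "a d * (\<tau> * (u - ln (real d)) + Cm) \<le> a d * LS d \<and> a d * LS d \<le> a d * (\<tau> * (u - ln (real d)) + Cp)"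
    if d: "d \<in> {1..N}" for d
  proof -
    have "real d \<le> real N" using d by simp
    also have "real N \<le> x" using x1 by (simp add: N_def)
    finally have dx: "real d \<le> x" .
    have d1: "real d \<ge> 1" using d by simp
    have xd: "x / real d \<ge> 1" using dx d1 by simp
    have e1: "nat \<lfloor>x / real d\<rfloor> = N div d" using nat_floor_div[of x d] x1 d by (simp add: N_def)
    have e2: "ln (x / real d) = u - ln (real d)" using d1 by (simp add: ln_div x_def)
    have "Cm \<le> LS d - \<tau> * (u - ln (real d))" "LS d - \<tau> * (u - ln (real d)) \<le> Cp"
      using lo[OF xd] hi[OF xd] unfolding e1 e2 LS_def by simp_all
    then show ?thesis using a_nn[of d] by (auto intro!: mult_left_mono)
  qed
  have "(\<Sum>d\<in>{1..N}. a d * (\<tau> * (u - ln (real d)) + Cm)) \<le> (\<Sum>d\<in>{1..N}. a d * LS d)"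
    using bnd by (intro sum_mono) auto
  moreover have "(\<Sum>d\<in>{1..N}. a d * LS d) \<le> (\<Sum>d\<in>{1..N}. a d * (\<tau> * (u - ln (real d)) + Cp))"
    using bnd by (intro sum_mono) auto
  moreover have "(\<Sum>d\<in>{1..N}. a d * (\<tau> * (u - ln (real d)) + c)) = \<tau> * J u + c * S u" for c
  proof -
    have "(\<Sum>d\<in>{1..N}. a d * (\<tau> * (u - ln (real d)) + c)) =
      (\<Sum>d\<in>{1..N}. \<tau> * (a d * (u - ln (real d))) + c * a d)"
      by (intro sum.cong) (simp_all add: algebra_simps)
    also have "\<dots> = \<tau> * (\<Sum>d\<in>{1..N}. a d * (u - ln (real d))) + c * (\<Sum>d\<in>{1..N}. a d)"
      by (simp add: sum.distrib sum_distrib_left)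
    finally show ?thesis unfolding S_def J_def N_def x_def .
  qed
  ultimately have "\<tau> * J u + Cm * S u \<le> u * S u - J u" "u * S u - J u \<le> \<tau> * J u + Cp * S u"
    using T uSJ by simp_all
  then show "(u - Cp) * S u \<le> (1+\<tau>) * J u" "(1+\<tau>) * J u \<le> (u - Cm) * S u"
    by (simp_all add: algebra_simps)
qed

lemma J_nonneg: "J u \<ge> 0"
  unfolding J_def
proof (intro sum_nonneg)
  fix n assume n: "n \<in> {1..nat \<lfloor>exp u\<rfloor>}"
  then have "ln (real n) \<le> u" using le_nat_floor_exp[of n u] by simp
  then show "0 \<le> a n * (u - ln (real n))" using a_nn[of n] by simp
qed

lemma J_ge:
  assumes "u \<ge> 0" shows "J u \<ge> u"
proof -
  have one: "1 \<in> {1..nat \<lfloor>exp u\<rfloor>}" using le_nat_floor_exp[of 1 u] assms by simp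
  have "a 1 * (u - ln (real 1)) \<le> J u"
    unfolding J_def
  proof (rule member_le_sum[OF one])
    fix n assume n: "n \<in> {1..nat \<lfloor>exp u\<rfloor>} - {1}"
    then have "ln (real n) \<le> u" using le_nat_floor_exp[of n u] by simp
    then show "0 \<le> a n * (u - ln (real n))" using a_nn[of n] by simp
  qed simp
  then show ?thesis using a1 by simp
qed

lemma J_eq_JN:
  assumes "nat \<lfloor>exp u\<rfloor> \<le> M"
  shows "J u = JN M u"
proof -
  have "JN M u = (\<Sum>n\<in>{1..nat \<lfloor>exp u\<rfloor>}. a n * max 0 (u - ln (real n)))"
    unfolding JN_def
  proof (rule sum.mono_neutral_right)
    show "{1..nat \<lfloor>exp u\<rfloor>} \<subseteq> {1..M}" using assms by auto
    show "\<forall>i\<in>{1..M} - {1..nat \<lfloor>exp u\<rfloor>}. a i * max 0 (u - ln (real i)) = 0"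
    proof
      fix i assume i: "i \<in> {1..M} - {1..nat \<lfloor>exp u\<rfloor>}"
      then have "\<not> ln (real i) \<le> u" using le_nat_floor_exp[of i u] by auto
      then show "a i * max 0 (u - ln (real i)) = 0" by simp
    qed
  qed simp
  also have "\<dots> = J u"
    unfolding J_def
  proof (rule sum.cong[OF refl])
    fix n assume n: "n \<in> {1..nat \<lfloor>exp u\<rfloor>}"
    then have "ln (real n) \<le> u" using le_nat_floor_exp[of n u] by simp
    then show "a n * max 0 (u - ln (real n)) = a n * (u - ln (real n))" by simp
  qed
  finally show ?thesis by simp
qed

lemma JN_nonneg: "JN N u \<ge> 0"
  unfolding JN_def by (intro sum_nonneg) (simp add: a_nn)

lemma JN_mono: "N \<le> M \<Longrightarrow> JN N u \<le> JN M u"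
  unfolding JN_def by (intro sum_mono2) (auto simp: a_nn)

lemma JN_le_J: "JN N u \<le> J u"
proof -
  have "JN N u \<le> JN (max N (nat \<lfloor>exp u\<rfloor>)) u" by (rule JN_mono) simp
  also have "\<dots> = J u" by (rule J_eq_JN[symmetric]) simp
  finally show ?thesis .
qed

lemma JN_mono_u: "u \<le> v \<Longrightarrow> JN M u \<le> JN M v"
  unfolding JN_def by (intro sum_mono mult_left_mono) (auto simp: a_nn)

lemma J_mono: assumes "u \<le> v" shows "J u \<le> J v"
proof -
  define M where "M = nat \<lfloor>exp v\<rfloor>"
  have "nat \<lfloor>exp u\<rfloor> \<le> M" unfolding M_def using assms by (intro nat_mono floor_mono) simp
  then have "J u = JN M u" by (rule J_eq_JN)
  also have "\<dots> \<le> JN M v" by (rule JN_mono_u[OF assms])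
  also have "\<dots> = J v" by (rule J_eq_JN[symmetric]) (simp add: M_def)
  finally show ?thesis .
qed

lemma JN_cont: "continuous_on A (JN M)"
  unfolding JN_def by (intro continuous_intros)

lemma JN_deriv:
  assumes "\<forall>n\<in>{1..M}. u \<noteq> ln (real n)"
  shows "(JN M has_real_derivative (\<Sum>n\<in>{1..M}. if ln (real n) < u then a n else 0)) (at u)"
  unfolding JN_def
proof (rule DERIV_sum)
  fix n assume n: "n \<in> {1..M}"
  show "((\<lambda>x. a n * max 0 (x - ln (real n))) has_real_derivative (if ln (real n) < u then a n else 0)) (at u)"
  proof (cases "ln (real n) < u")
    case True
    have "((\<lambda>x. a n * (x - ln (real n))) has_real_derivative a n) (at u)"
      by (auto intro!: derivative_eq_intros)
    then have "((\<lambda>x. a n * max 0 (x - ln (real n))) has_real_derivative a n) (at u)"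
    proof (rule has_field_derivative_transform_within_open[where S = "{ln (real n)<..}"])
      show "open {ln (real n)<..}" by simp
      show "u \<in> {ln (real n)<..}" using True by simp
      fix x :: real assume "x \<in> {ln (real n)<..}"
      then show "a n * (x - ln (real n)) = a n * max 0 (x - ln (real n))" by simp
    qed
    then show ?thesis using True by simp
  next
    case False
    have "u \<noteq> ln (real n)" using assms n by blast
    then have lt: "u < ln (real n)" using False by linarith
    have "((\<lambda>x. 0) has_real_derivative 0) (at u)" by simp
    then have "((\<lambda>x. a n * max 0 (x - ln (real n))) has_real_derivative 0) (at u)"
    proof (rule has_field_derivative_transform_within_open[where S = "{..<ln (real n)}"])
      show "open {..<ln (real n)}" by simp
      show "u \<in> {..<ln (real n)}" using lt by simp
      fix x :: real assume "x \<in> {..<ln (real n)}"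
      then show "0 = a n * max 0 (x - ln (real n))" by simp
    qed
    then show ?thesis using False by simp
  qed
qed

end

lemma mono_by_deriv:
  fixes g g' :: "real \<Rightarrow> real"
  assumes "p \<le> q" "finite E" "continuous_on {p..q} g"
    and "\<And>x. x \<in> {p<..<q} - E \<Longrightarrow> (g has_real_derivative g' x) (at x)"
    and "\<And>x. x \<in> {p..q} \<Longrightarrow> g' x \<ge> 0"
  shows "g p \<le> g q"
proof -
  have "(g' has_integral (g q - g p)) {p..q}"
    using assms(4) by (intro fundamental_theorem_of_calculus_interior_strong[OF assms(2,1) _ assms(3)])
      (simp add: has_real_derivative_iff_has_vector_derivative[symmetric])
  then have "0 \<le> g q - g p" using assms(5) by (rule has_integral_nonneg)
  then show ?thesis by simp
qed

context setting begin

lemma S_eq_deriv_sum: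
  assumes "u < q" "\<forall>n\<in>{1..nat \<lfloor>exp q\<rfloor>}. u \<noteq> ln (real n)"
  shows "(\<Sum>n\<in>{1..nat \<lfloor>exp q\<rfloor>}. if ln (real n) < u then a n else 0) = S u"
proof -
  let ?M = "nat \<lfloor>exp q\<rfloor>"
  have sub: "{1..nat \<lfloor>exp u\<rfloor>} \<subseteq> {1..?M}" using assms(1) by (auto intro!: nat_mono floor_mono)
  have "(\<Sum>n\<in>{1..?M}. if ln (real n) < u then a n else 0) =
        (\<Sum>n\<in>{1..nat \<lfloor>exp u\<rfloor>}. if ln (real n) < u then a n else 0)"
  proof (rule sum.mono_neutral_right[OF _ sub])
    show "\<forall>i\<in>{1..?M} - {1..nat \<lfloor>exp u\<rfloor>}. (if ln (real i) < u then a i else 0) = 0"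
    proof
      fix i assume i: "i \<in> {1..?M} - {1..nat \<lfloor>exp u\<rfloor>}"
      then have "\<not> ln (real i) \<le> u" using le_nat_floor_exp[of i u] by auto
      then show "(if ln (real i) < u then a i else 0) = 0" by simp
    qed
  qed simp
  also have "\<dots> = S u" unfolding S_def
  proof (rule sum.cong[OF refl])
    fix n assume n: "n \<in> {1..nat \<lfloor>exp u\<rfloor>}"
    then have "ln (real n) \<le> u" using le_nat_floor_exp[of n u] by simp
    moreover have "u \<noteq> ln (real n)" using assms(2) n sub by blast
    ultimately show "(if ln (real n) < u then a n else 0) = a n" by simp
  qed
  finally show ?thesis .
qed

lemma J_deriv:
  assumes "u < q" "\<forall>n\<in>{1..nat \<lfloor>exp q\<rfloor>}. u \<noteq> ln (real n)"
  shows "(J has_real_derivative S u) (at u)"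
proof -
  let ?M = "nat \<lfloor>exp q\<rfloor>"
  have "(JN ?M has_real_derivative (\<Sum>n\<in>{1..?M}. if ln (real n) < u then a n else 0)) (at u)"
    using JN_deriv assms(2) by blast
  then have "(JN ?M has_real_derivative S u) (at u)" using S_eq_deriv_sum[OF assms] by simp
  then show ?thesis
  proof (rule has_field_derivative_transform_within_open[where S = "{..<q}"])
    show "open {..<q}" by simp
    show "u \<in> {..<q}" using assms by simp
    fix x assume "x \<in> {..<q}"
    then have "nat \<lfloor>exp x\<rfloor> \<le> ?M" by (auto intro!: nat_mono floor_mono)
    then show "JN ?M x = J x" by (rule J_eq_JN[symmetric])
  qed
qed

lemma J_cont: "continuous_on {p..q} J"
proof -
  have "continuous_on {p..q} (JN (nat \<lfloor>exp q\<rfloor>))" by (rule JN_cont)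
  moreover have "\<And>x. x \<in> {p..q} \<Longrightarrow> JN (nat \<lfloor>exp q\<rfloor>) x = J x"
    by (rule J_eq_JN[symmetric]) (auto intro!: nat_mono floor_mono)
  ultimately show ?thesis using continuous_on_cong by blast
qed

definition g1 :: "real \<Rightarrow> real" where "g1 u = ln (J u) - (1+\<tau>) * ln (u - Cm)"
definition g2 :: "real \<Rightarrow> real" where "g2 u = ln (J u) - (1+\<tau>) * ln (u - Cp)"

lemma J_pos: "u > 0 \<Longrightarrow> J u > 0" using J_ge[of u] by simp

lemma g_mono:
  assumes "Cp < p" "p \<le> q"
  shows "g1 p \<le> g1 q" "g2 q \<le> g2 p"
proof -
  note cc = Cm_Cp
  define E where "E = (\<lambda>n. ln (real n)) ` {1..nat \<lfloor>exp q\<rfloor>}"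
  have E: "finite E" by (simp add: E_def)
  have pos: "J x > 0" "x - Cm > 0" "x - Cp > 0" if "x \<in> {p..q}" for x
    using that assms cc J_pos[of x] by auto
  have dJ: "(J has_real_derivative S x) (at x)" if "x \<in> {p<..<q} - E" for x
    using that by (intro J_deriv[of x q]) (auto simp: E_def)
  have contJ: "continuous_on {p..q} J" by (rule J_cont)
  have contl: "continuous_on {p..q} (\<lambda>x. ln (J x))"
  proof (rule continuous_on_ln[OF contJ])
    show "\<forall>x\<in>{p..q}. J x \<noteq> 0" using pos(1) by force
  qed
  show "g1 p \<le> g1 q"
  proof (rule mono_by_deriv[OF assms(2) E, where g' = "\<lambda>x. S x / J x - (1+\<tau>) * (1 / (x - Cm))"])
    have "continuous_on {p..q} (\<lambda>x. (1+\<tau>) * ln (x - Cm))"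
      using assms cc by (intro continuous_intros) auto
    then show "continuous_on {p..q} g1" unfolding g1_def
      using contl by (rule continuous_on_diff[rotated])
    fix x assume x: "x \<in> {p<..<q} - E"
    then have px: "x \<in> {p..q}" by auto
    show "(g1 has_real_derivative S x / J x - (1+\<tau>) * (1 / (x - Cm))) (at x)"
      unfolding g1_def using dJ[OF x] pos[OF px]
      by (auto intro!: derivative_eq_intros simp: field_simps)
  next
    fix x assume px: "x \<in> {p..q}"
    have "(1+\<tau>) * J x \<le> (x - Cm) * S x" using K1(2)[of x] pos[OF px] cc by auto
    then show "0 \<le> S x / J x - (1+\<tau>) * (1 / (x - Cm))"
      using pos[OF px] by (simp add: field_simps)
  qed
  have "(\<lambda>x. - g2 x) p \<le> (\<lambda>x. - g2 x) q"
  proof (rule mono_by_deriv[OF assms(2) E, where g' = "\<lambda>x. - (S x / J x - (1+\<tau>) * (1 / (x - Cp)))"])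
    have "continuous_on {p..q} (\<lambda>x. (1+\<tau>) * ln (x - Cp))"
      using assms cc by (intro continuous_intros) auto
    then have "continuous_on {p..q} g2" unfolding g2_def
      using contl by (rule continuous_on_diff[rotated])
    then show "continuous_on {p..q} (\<lambda>x. - g2 x)" by (rule continuous_on_minus)
    fix x assume x: "x \<in> {p<..<q} - E"
    then have px: "x \<in> {p..q}" by auto
    show "((\<lambda>x. - g2 x) has_real_derivative - (S x / J x - (1+\<tau>) * (1 / (x - Cp)))) (at x)"
      unfolding g2_def using dJ[OF x] pos[OF px]
      by (auto intro!: derivative_eq_intros simp: field_simps)
  next
    fix x assume px: "x \<in> {p..q}"
    have "(x - Cp) * S x \<le> (1+\<tau>) * J x" using K1(1)[of x] pos[OF px] cc by auto
    then show "0 \<le> - (S x / J x - (1+\<tau>) * (1 / (x - Cp)))"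
      using pos[OF px] by (simp add: field_simps)
  qed
  then show "g2 q \<le> g2 p" by simp
qed

lemma g1_le_g2: assumes "Cp < u" shows "g1 u \<le> g2 u"
proof -
  have "ln (u - Cp) \<le> ln (u - Cm)" using assms Cm_Cp by simp
  then show ?thesis unfolding g1_def g2_def using tau by (simp add: mult_left_mono)
qed

lemma exists_A:
  obtains A where "A > 0" "\<And>u. Cp < u \<Longrightarrow> A * (u - Cp) powr (1+\<tau>) \<le> J u"
    "\<And>u. Cp < u \<Longrightarrow> J u \<le> A * (u - Cm) powr (1+\<tau>)"
proof -
  note cc = Cm_Cp
  define w where "w k = Cp + 1 + real k" for k :: nat
  have w: "Cp < w k" for k by (simp add: w_def)
  have inc: "incseq (\<lambda>k. g1 (w k))"
    by (rule incseq_SucI) (use w in \<open>auto intro: g_mono(1) simp: w_def\<close>)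
  have bnd: "\<forall>k. g1 (w k) \<le> g2 (w 0)"
  proof
    fix k
    have "g1 (w k) \<le> g2 (w k)" by (rule g1_le_g2[OF w])
    also have "\<dots> \<le> g2 (w 0)" by (rule g_mono(2)) (use w in \<open>auto simp: w_def\<close>)
    finally show "g1 (w k) \<le> g2 (w 0)" .
  qed
  obtain L where L: "(\<lambda>k. g1 (w k)) \<longlonglongrightarrow> L" "\<forall>k. g1 (w k) \<le> L"
    using incseq_convergent[OF inc bnd] by blast
  have up: "g1 u \<le> L" if u: "Cp < u" for u
  proof -
    obtain k :: nat where "u \<le> real k" using real_arch_simple by blast
    then have "u \<le> w k" using cc by (simp add: w_def)
    then have "g1 u \<le> g1 (w k)" using u by (rule_tac g_mono(1)) auto
    then show ?thesis using L(2) by (meson order_trans)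
  qed
  have diff: "(\<lambda>k. g2 (w k) - g1 (w k)) \<longlonglongrightarrow> 0"
  proof -
    have "(\<lambda>k. inverse (real (Suc k))) \<longlonglongrightarrow> 0" by (rule LIMSEQ_inverse_real_of_nat)
    then have "(\<lambda>k. 1 + (Cp - Cm) * inverse (real (Suc k))) \<longlonglongrightarrow> 1 + (Cp - Cm) * 0"
      by (intro tendsto_intros)
    then have "(\<lambda>k. (1+\<tau>) * ln (1 + (Cp - Cm) * inverse (real (Suc k)))) \<longlonglongrightarrow> (1+\<tau>) * ln 1"
      by (intro tendsto_intros) auto
    moreover have "g2 (w k) - g1 (w k) = (1+\<tau>) * ln (1 + (Cp - Cm) * inverse (real (Suc k)))" for k
    proof -
      have p1: "w k - Cp = real (Suc k)" by (simp add: w_def)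
      have p2: "w k - Cm = real (Suc k) * (1 + (Cp - Cm) * inverse (real (Suc k)))"
        by (simp add: w_def field_simps)
      have pos: "1 + (Cp - Cm) * inverse (real (Suc k)) > 0" using cc
        by (simp add: add_pos_nonneg)
      have "ln (w k - Cm) = ln (real (Suc k)) + ln (1 + (Cp - Cm) * inverse (real (Suc k)))"
        unfolding p2 using pos by (simp add: ln_mult)
      then show ?thesis unfolding g1_def g2_def p1 by (simp add: algebra_simps)
    qed
    ultimately show ?thesis by simp
  qed
  have g2lim: "(\<lambda>k. g2 (w k)) \<longlonglongrightarrow> L"
    using tendsto_add[OF diff L(1)] by simp
  have lo2: "L \<le> g2 u" if u: "Cp < u" for u
  proof (rule LIMSEQ_le_const2[OF g2lim])
    obtain k :: nat where "u \<le> real k" using real_arch_simple by blast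
    then have "\<forall>n\<ge>k. u \<le> w n" using cc by (auto simp: w_def)
    then show "\<exists>N. \<forall>n\<ge>N. g2 (w n) \<le> g2 u" using u by (blast intro: g_mono(2))
  qed
  show ?thesis
  proof (rule that[of "exp L"])
    show "exp L > 0" by simp
  next
    fix u assume u: "Cp < u"
    have Jp: "J u > 0" using J_pos[of u] u cc by simp
    have "L \<le> ln (J u) - (1+\<tau>) * ln (u - Cp)" using lo2[OF u] by (simp add: g2_def)
    then have "exp (L + (1+\<tau>) * ln (u - Cp)) \<le> exp (ln (J u))" by simp
    then show "exp L * (u - Cp) powr (1+\<tau>) \<le> J u"
      using Jp u by (simp add: powr_def exp_add mult.commute)
  next
    fix u assume u: "Cp < u"
    have Jp: "J u > 0" using J_pos[of u] u cc by simp
    have "ln (J u) - (1+\<tau>) * ln (u - Cm) \<le> L" using up[OF u] by (simp add: g1_def)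
    then have "exp (ln (J u)) \<le> exp (L + (1+\<tau>) * ln (u - Cm))" by simp
    then show "J u \<le> exp L * (u - Cm) powr (1+\<tau>)"
      using Jp u cc by (simp add: powr_def exp_add mult.commute)
  qed
qed

end

lemma Gamma2: "Gamma (1 + 1 :: real) = 1"
  using Gamma_fact[of 1] by simp

context setting begin

lemma J_neg: "v < 0 \<Longrightarrow> J v = 0"
proof -
  assume v: "v < 0"
  have "\<not> 1 \<le> nat \<lfloor>exp v\<rfloor>" using le_nat_floor_exp[of 1 v] v by simp
  then have "{1..nat \<lfloor>exp v\<rfloor>} = {}" by auto
  then show ?thesis by (simp add: J_def)
qed

lemma term_integral:
  assumes n: "n \<ge> 1" and s: "\<sigma> > 0"
  shows "((\<lambda>v. a n * max 0 (v - ln (real n)) * exp (-\<sigma> * v)) has_integral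
           (f n / real n powr (1 + \<sigma>) / \<sigma> powr 2)) UNIV"
proof -
  have "((\<lambda>v. if ln (real n) \<le> v then (v - ln (real n)) powr 1 * exp (-\<sigma> * v) else 0) has_integral
          (exp(-\<sigma> * ln (real n)) * Gamma(1+1) / \<sigma> powr (1+1))) UNIV"
    by (rule gamma_shift) (use s in auto)
  then have "((\<lambda>v. a n * (if ln (real n) \<le> v then (v - ln (real n)) powr 1 * exp (-\<sigma> * v) else 0)) has_integral
          (a n * (exp(-\<sigma> * ln (real n)) * Gamma(1+1) / \<sigma> powr (1+1)))) UNIV"
    by (rule has_integral_mult_right)
  moreover have "a n * (if ln (real n) \<le> v then (v - ln (real n)) powr 1 * exp (-\<sigma> * v) else 0)
      = a n * max 0 (v - ln (real n)) * exp (-\<sigma> * v)" for v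
    by (auto simp: max_def)
  moreover have "a n * (exp(-\<sigma> * ln (real n)) * Gamma(1+1) / \<sigma> powr (1+1)) = f n / real n powr (1 + \<sigma>) / \<sigma> powr 2"
  proof -
    have np: "real n > 0" using n by simp
    have "exp(-\<sigma> * ln (real n)) = inverse (real n powr \<sigma>)"
      using np by (simp add: powr_def exp_minus)
    moreover have "real n powr (1 + \<sigma>) = real n * real n powr \<sigma>"
      using np by (simp add: powr_add)
    ultimately show ?thesis using Gamma2 by (simp add: a_def field_simps)
  qed
  ultimately show ?thesis by simp
qed

lemma JN_integral:
  assumes s: "\<sigma> > 0"
  shows "((\<lambda>v. JN N v * exp (-\<sigma> * v)) has_integral
           (\<Sum>n\<in>{1..N}. f n / real n powr (1 + \<sigma>)) / \<sigma> powr 2) UNIV"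
proof -
  have "((\<lambda>v. \<Sum>n\<in>{1..N}. a n * max 0 (v - ln (real n)) * exp (-\<sigma> * v)) has_integral
           (\<Sum>n\<in>{1..N}. f n / real n powr (1 + \<sigma>) / \<sigma> powr 2)) UNIV"
    by (rule has_integral_sum) (use term_integral s in auto)
  then show ?thesis by (simp add: JN_def sum_distrib_right sum_divide_distrib)
qed

lemma Lf_bounds:
  assumes A: "A > 0" "\<And>u. Cp < u \<Longrightarrow> A * (u - Cp) powr (1+\<tau>) \<le> J u"
      "\<And>u. Cp < u \<Longrightarrow> J u \<le> A * (u - Cm) powr (1+\<tau>)"
    and s: "\<sigma> > 0"
  shows "A * Gamma(\<tau>+2) * exp(-\<sigma>*Cp) \<le> \<sigma> powr \<tau> * L_f f (1+\<sigma>)"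
    "\<sigma> powr \<tau> * L_f f (1+\<sigma>) \<le> \<sigma> powr (\<tau>+2) * (J Cp * Cp) + A * Gamma(\<tau>+2) * exp(-\<sigma>*Cm)"
proof -
  note cc = Cm_Cp
  have e2: "1 + \<tau> + 1 = \<tau> + 2" by simp
  define g where "g v = J v * exp (-\<sigma> * v)" for v
  define \<Phi> where "\<Phi> k v = JN k v * exp (-\<sigma> * v)" for k v
  define K where "K = J Cp"
  have K0: "K \<ge> 0" by (simp add: K_def J_nonneg)
  define H where "H v = (if v \<in> {0..Cp} then K else 0) +
      A * (if Cm \<le> v then (v - Cm) powr (1+\<tau>) * exp (-\<sigma> * v) else 0)" for v
  define IH where "IH = K * Cp + A * (exp(-\<sigma>*Cm) * Gamma(\<tau>+2) / \<sigma> powr (\<tau>+2))"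
  define Lo where "Lo v = A * (if Cp \<le> v then (v - Cp) powr (1+\<tau>) * exp (-\<sigma> * v) else 0)" for v
  define ILo where "ILo = A * (exp(-\<sigma>*Cp) * Gamma(\<tau>+2) / \<sigma> powr (\<tau>+2))"
  have H_int: "(H has_integral IH) UNIV"
  proof -
    have "((\<lambda>v. K) has_integral (K * Cp)) {0..Cp}"
      using has_integral_const_real[of K 0 Cp] cc by (simp add: mult.commute)
    then have h1: "((\<lambda>v. if v \<in> {0..Cp} then K else 0) has_integral (K * Cp)) UNIV"
      by (subst has_integral_restrict_UNIV)
    have "((\<lambda>v. if Cm \<le> v then (v - Cm) powr (1+\<tau>) * exp (-\<sigma> * v) else 0) has_integral
          (exp(-\<sigma>*Cm) * Gamma(1+\<tau>+1) / \<sigma> powr (1+\<tau>+1))) UNIV"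
      by (rule gamma_shift) (use s tau in auto)
    then have h2: "((\<lambda>v. A * (if Cm \<le> v then (v - Cm) powr (1+\<tau>) * exp (-\<sigma> * v) else 0)) has_integral
          A * (exp(-\<sigma>*Cm) * Gamma(\<tau>+2) / \<sigma> powr (\<tau>+2))) UNIV"
      unfolding e2 by (rule has_integral_mult_right)
    show ?thesis unfolding H_def IH_def by (rule has_integral_add[OF h1 h2])
  qed
  have Lo_int: "(Lo has_integral ILo) UNIV"
  proof -
    have "((\<lambda>v. if Cp \<le> v then (v - Cp) powr (1+\<tau>) * exp (-\<sigma> * v) else 0) has_integral
          (exp(-\<sigma>*Cp) * Gamma(1+\<tau>+1) / \<sigma> powr (1+\<tau>+1))) UNIV"
      by (rule gamma_shift) (use s tau in auto)
    then show ?thesis unfolding Lo_def ILo_def e2 by (rule has_integral_mult_right)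
  qed
  have g_le_H: "g v \<le> H v" for v
  proof -
    have H2: "0 \<le> A * (if Cm \<le> v then (v - Cm) powr (1+\<tau>) * exp (-\<sigma> * v) else 0)"
      using A(1) by simp
    have H1: "0 \<le> (if v \<in> {0..Cp} then K else 0)" using K0 by simp
    consider "v < 0" | "0 \<le> v" "v \<le> Cp" | "Cp < v" by linarith
    then show ?thesis
    proof cases
      case 1
      then show ?thesis using H1 H2 J_neg[of v] by (simp add: g_def H_def)
    next
      case 2
      have "J v \<le> K" unfolding K_def using 2(2) by (rule J_mono)
      moreover have "exp (-\<sigma> * v) \<le> 1" using 2 s by simp
      ultimately have "J v * exp (-\<sigma> * v) \<le> K * 1"
        using J_nonneg[of v] K0 by (intro mult_mono) auto
      then show ?thesis using 2 H2 by (simp add: g_def H_def)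
    next
      case 3
      have "J v * exp (-\<sigma> * v) \<le> A * (v - Cm) powr (1+\<tau>) * exp (-\<sigma> * v)"
        using A(3)[OF 3] by (intro mult_right_mono) auto
      then show ?thesis using 3 cc H1 by (simp add: g_def H_def)
    qed
  qed
  have Lo_le_g: "Lo v \<le> g v" for v
  proof (cases "Cp < v")
    case True
    have "A * (v - Cp) powr (1+\<tau>) * exp (-\<sigma> * v) \<le> J v * exp (-\<sigma> * v)"
      using A(2)[OF True] by (intro mult_right_mono) auto
    then show ?thesis using True by (simp add: g_def Lo_def)
  next
    case False
    then show ?thesis using J_nonneg[of v] by (auto simp: g_def Lo_def)
  qed
  have Phi_le: "\<Phi> k v \<le> g v" for k v
    unfolding \<Phi>_def g_def by (intro mult_right_mono JN_le_J) auto
  have Phi_int: "(\<Phi> k has_integral (\<Sum>n\<in>{1..k}. f n / real n powr (1 + \<sigma>)) / \<sigma> powr 2) UNIV" for k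
    unfolding \<Phi>_def by (rule JN_integral[OF s])
  have mct: "g integrable_on UNIV \<and> ((\<lambda>k. integral UNIV (\<Phi> k)) \<longlongrightarrow> integral UNIV g) sequentially"
  proof (rule monotone_convergence_increasing)
    show "\<Phi> k integrable_on UNIV" for k using Phi_int by blast
    show "\<Phi> k x \<le> \<Phi> (Suc k) x" for k x
      unfolding \<Phi>_def by (intro mult_right_mono JN_mono) auto
    show "(\<lambda>k. \<Phi> k x) \<longlonglongrightarrow> g x" for x
    proof (rule tendsto_eventually)
      have "\<forall>k\<ge>nat \<lfloor>exp x\<rfloor>. \<Phi> k x = g x"
        unfolding \<Phi>_def g_def using J_eq_JN[of x] by auto
      then show "\<forall>\<^sub>F k in sequentially. \<Phi> k x = g x"
        unfolding eventually_sequentially by blast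
    qed
    have "\<bar>integral UNIV (\<Phi> k)\<bar> \<le> IH" for k
    proof -
      have "0 \<le> integral UNIV (\<Phi> k)"
        using Phi_int[of k] by (intro integral_nonneg) (auto simp: \<Phi>_def JN_nonneg)
      moreover have "integral UNIV (\<Phi> k) \<le> integral UNIV H"
        using Phi_int[of k] H_int Phi_le g_le_H by (intro integral_le) (auto intro: order_trans)
      moreover have "integral UNIV H = IH" using H_int by (rule integral_unique)
      ultimately show ?thesis by simp
    qed
    then show "bounded (range (\<lambda>k. integral UNIV (\<Phi> k)))"
      unfolding bounded_real by blast
  qed
  define I where "I = integral UNIV g"
  have gI: "(g has_integral I) UNIV" using mct unfolding I_def by (blast intro: integrable_integral)
  have "(\<lambda>k. (\<Sum>n\<in>{1..k}. f n / real n powr (1 + \<sigma>)) / \<sigma> powr 2) \<longlonglongrightarrow> I"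
  proof -
    have "integral UNIV (\<Phi> k) = (\<Sum>n\<in>{1..k}. f n / real n powr (1 + \<sigma>)) / \<sigma> powr 2" for k
      using Phi_int[of k] by (rule integral_unique)
    then show ?thesis using mct unfolding I_def by simp
  qed
  then have "(\<lambda>k. (\<Sum>n\<in>{1..k}. f n / real n powr (1 + \<sigma>)) / \<sigma> powr 2 * \<sigma> powr 2) \<longlonglongrightarrow> I * \<sigma> powr 2"
    by (intro tendsto_intros)
  then have P: "(\<lambda>k. \<Sum>n\<in>{1..k}. f n / real n powr (1 + \<sigma>)) \<longlonglongrightarrow> I * \<sigma> powr 2"
    using s by simp
  have "(\<lambda>n. f n / real n powr (1 + \<sigma>)) sums (I * \<sigma> powr 2)"
    unfolding sums_def
  proof (rule LIMSEQ_imp_Suc)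
    have "(\<Sum>n<Suc k. f n / real n powr (1 + \<sigma>)) = (\<Sum>n\<in>{1..k}. f n / real n powr (1 + \<sigma>))" for k
    proof -
      have "(\<Sum>n<Suc k. f n / real n powr (1 + \<sigma>)) = (\<Sum>n\<in>{0..k}. f n / real n powr (1 + \<sigma>))"
        by (simp add: lessThan_Suc_atMost atMost_atLeast0)
      also have "\<dots> = f 0 / real 0 powr (1 + \<sigma>) + (\<Sum>n\<in>{Suc 0..k}. f n / real n powr (1 + \<sigma>))"
        by (rule sum.atLeast_Suc_atMost) simp
      finally show ?thesis by simp
    qed
    then show "(\<lambda>k. \<Sum>n<Suc k. f n / real n powr (1 + \<sigma>)) \<longlonglongrightarrow> I * \<sigma> powr 2" using P by simp
  qed
  then have Lf: "L_f f (1+\<sigma>) = I * \<sigma> powr 2" unfolding L_f_def by (rule sums_unique[symmetric])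
  have pw: "\<sigma> powr \<tau> * (I * \<sigma> powr 2) = \<sigma> powr (\<tau>+2) * I"
    using s by (simp add: powr_add)
  have sp: "\<sigma> powr (\<tau>+2) > 0" using s by simp
  have "I \<le> IH" using gI H_int g_le_H by (rule has_integral_le)
  then have "\<sigma> powr (\<tau>+2) * I \<le> \<sigma> powr (\<tau>+2) * IH" using sp by simp
  also have "\<sigma> powr (\<tau>+2) * IH = \<sigma> powr (\<tau>+2) * (K * Cp) + A * Gamma(\<tau>+2) * exp(-\<sigma>*Cm)"
    using sp by (simp add: IH_def field_simps)
  finally show "\<sigma> powr \<tau> * L_f f (1+\<sigma>) \<le> \<sigma> powr (\<tau>+2) * (J Cp * Cp) + A * Gamma(\<tau>+2) * exp(-\<sigma>*Cm)"
    unfolding Lf pw K_def .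
  have "ILo \<le> I" using Lo_int gI Lo_le_g by (rule has_integral_le)
  then have "\<sigma> powr (\<tau>+2) * ILo \<le> \<sigma> powr (\<tau>+2) * I" using sp by simp
  moreover have "\<sigma> powr (\<tau>+2) * ILo = A * Gamma(\<tau>+2) * exp(-\<sigma>*Cp)"
    using sp by (simp add: ILo_def field_simps)
  ultimately show "A * Gamma(\<tau>+2) * exp(-\<sigma>*Cp) \<le> \<sigma> powr \<tau> * L_f f (1+\<sigma>)"
    unfolding Lf pw by simp
qed

end

lemma alg:
  fixes u c d C \<tau> :: real
  assumes "u > 0" "u > c" "u > d"
  shows "C / \<tau> * u powr \<tau> * (1 - c / u) powr (\<tau> + 1) / (1 - d / u) = C / \<tau> * (u - c) powr (\<tau> + 1) / (u - d)"
proof -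
  have e1: "1 - c / u = (u - c) / u" "1 - d / u = (u - d) / u" using assms by (simp_all add: field_simps)
  have e2: "u powr (\<tau> + 1) = u powr \<tau> * u" using assms by (simp add: powr_add)
  have "u powr \<tau> > 0" using assms by simp
  then show ?thesis unfolding e1 powr_divide e2 using assms by (simp add: field_simps)
qed

context setting begin

lemma C_f_value:
  assumes A: "A > 0" "\<And>u. Cp < u \<Longrightarrow> A * (u - Cp) powr (1+\<tau>) \<le> J u"
      "\<And>u. Cp < u \<Longrightarrow> J u \<le> A * (u - Cm) powr (1+\<tau>)"
  shows "C_f f \<tau> = A * (\<tau> + 1) * \<tau>"
proof -
  let ?G = "Gamma (\<tau> + 2)"
  have lim: "((\<lambda>s. (s - 1) powr \<tau> * L_f f s) \<longlongrightarrow> A * ?G) (at_right 1)"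
  proof (rule tendsto_sandwich)
    have ev: "\<forall>\<^sub>F s in at_right (1::real). s \<in> {1<..<2}" by (rule eventually_at_right_real) simp
    show "\<forall>\<^sub>F s in at_right 1. A * ?G * exp (-(s-1) * Cp) \<le> (s - 1) powr \<tau> * L_f f s"
      using ev
    proof (rule eventually_mono)
      fix s :: real assume "s \<in> {1<..<2}"
      then show "A * ?G * exp (-(s-1) * Cp) \<le> (s - 1) powr \<tau> * L_f f s"
        using Lf_bounds(1)[OF A, of "s - 1"] by simp
    qed
    show "\<forall>\<^sub>F s in at_right 1. (s - 1) powr \<tau> * L_f f s \<le>
             (s - 1) powr (\<tau> + 2) * (J Cp * Cp) + A * ?G * exp (-(s-1) * Cm)"
      using ev
    proof (rule eventually_mono)
      fix s :: real assume "s \<in> {1<..<2}"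
      then show "(s - 1) powr \<tau> * L_f f s \<le> (s - 1) powr (\<tau> + 2) * (J Cp * Cp) + A * ?G * exp (-(s-1) * Cm)"
        using Lf_bounds(2)[OF A, of "s - 1"] by simp
    qed
    have s1: "((\<lambda>s::real. s - 1) \<longlongrightarrow> 0) (at_right 1)"
    proof -
      have "((\<lambda>s::real. s - 1) \<longlongrightarrow> 1 - 1) (at_right 1)" by (intro tendsto_intros)
      then show ?thesis by simp
    qed
    have "((\<lambda>s. A * ?G * exp (-(s-1) * Cp)) \<longlongrightarrow> A * ?G * exp (-0 * Cp)) (at_right 1)"
      by (intro tendsto_intros s1)
    then show "((\<lambda>s. A * ?G * exp (-(s-1) * Cp)) \<longlongrightarrow> A * ?G) (at_right 1)" by simp
    have p0: "((\<lambda>s::real. (s - 1) powr (\<tau> + 2)) \<longlongrightarrow> 0) (at_right 1)"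
    proof (rule tendsto_zero_powrI[OF s1 tendsto_const])
      show "\<forall>\<^sub>F s in at_right 1. 0 \<le> s - (1::real)"
        using ev by (rule eventually_mono) simp
      show "0 < \<tau> + 2" using tau by simp
    qed
    have "((\<lambda>s. (s - 1) powr (\<tau> + 2) * (J Cp * Cp) + A * ?G * exp (-(s-1) * Cm)) \<longlongrightarrow>
            0 * (J Cp * Cp) + A * ?G * exp (-0 * Cm)) (at_right 1)"
      by (intro tendsto_intros s1 p0)
    then show "((\<lambda>s. (s - 1) powr (\<tau> + 2) * (J Cp * Cp) + A * ?G * exp (-(s-1) * Cm)) \<longlongrightarrow> A * ?G) (at_right 1)"
      by simp
  qed
  have "Lim (at_right 1) (\<lambda>s. (s - 1) powr \<tau> * L_f f s) = A * ?G"
    by (rule tendsto_Lim[OF _ lim]) simp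
  moreover have "?G = (\<tau> + 1) * \<tau> * Gamma \<tau>"
  proof -
    have n1: "\<tau> + 1 \<notin> \<int>\<^sub>\<le>\<^sub>0" "\<tau> \<notin> \<int>\<^sub>\<le>\<^sub>0" using tau by (auto dest: nonpos_Ints_nonpos)
    have "?G = Gamma ((\<tau> + 1) + 1)" by (simp add: add.assoc)
    also have "\<dots> = (\<tau> + 1) * Gamma (\<tau> + 1)" by (rule Gamma_plus1[OF n1(1)])
    also have "Gamma (\<tau> + 1) = \<tau> * Gamma \<tau>" by (rule Gamma_plus1[OF n1(2)])
    finally show ?thesis by simp
  qed
  moreover have "Gamma \<tau> > 0" using tau by simp
  ultimately show ?thesis unfolding C_f_def by (simp add: field_simps)
qed

end

theorem lemma1:
  fixes f :: "nat \<Rightarrow> real" and \<tau> Cm Cp :: real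
  assumes "multiplicative_fn f"
    and "\<And>n. f n \<ge> 0"
    and "\<tau> > 0"
    and "\<And>x. x \<ge> 1 \<Longrightarrow>
           Cm \<le> (\<Sum>n\<in>{1..nat \<lfloor>x\<rfloor>}. Lambda_f f n / real n) - \<tau> * ln x"
    and "\<And>x. x \<ge> 1 \<Longrightarrow>
           (\<Sum>n\<in>{1..nat \<lfloor>x\<rfloor>}. Lambda_f f n / real n) - \<tau> * ln x \<le> Cp"
  shows "\<And>x. x > exp Cp \<Longrightarrow>
     C_f f \<tau> / \<tau> * ln x powr \<tau> * (1 - Cp / ln x) powr (\<tau> + 1) / (1 - Cm / ln x)
       \<le> mu_f f x
     \<and> mu_f f x \<le>
     C_f f \<tau> / \<tau> * ln x powr \<tau> * (1 - Cm / ln x) powr (\<tau> + 1) / (1 - Cp / ln x)"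
proof -
  fix x :: real assume x: "x > exp Cp"
  interpret setting f \<tau> Cm Cp
    using assms by unfold_locales (auto simp: multiplicative_fn_def)
  note cc = Cm_Cp
  obtain A where A: "A > 0" "\<And>u. Cp < u \<Longrightarrow> A * (u - Cp) powr (1+\<tau>) \<le> J u"
      "\<And>u. Cp < u \<Longrightarrow> J u \<le> A * (u - Cm) powr (1+\<tau>)"
    using exists_A by blast
  have C: "C_f f \<tau> / \<tau> = A * (1 + \<tau>)" using C_f_value[OF A] tau by (simp add: field_simps)
  have x0: "x > 0" using x by (meson exp_gt_zero order.strict_trans)
  define u where "u = ln x"
  have u: "Cp < u" unfolding u_def using x x0 by (metis ln_exp ln_less_cancel_iff exp_gt_zero)
  have u0: "u > 0" "u \<ge> 0" "u - Cp > 0" "u - Cm > 0" using u cc by auto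
  have mu: "mu_f f x = S u" unfolding mu_f_def S_def u_def a_def using x0 by simp
  have k1: "(u - Cp) * S u \<le> (1+\<tau>) * J u" "(1+\<tau>) * J u \<le> (u - Cm) * S u"
    using K1[OF u0(2)] by auto
  have tp: "1 + \<tau> > 0" using tau by simp
  have up: "S u \<le> A * (1 + \<tau>) * (u - Cm) powr (\<tau> + 1) / (u - Cp)"
  proof -
    have "(u - Cp) * S u \<le> (1+\<tau>) * (A * (u - Cm) powr (1+\<tau>))"
      using k1(1) A(3)[OF u] tp by (meson mult_left_mono less_imp_le order_trans)
    then show ?thesis using u0 by (simp add: pos_le_divide_eq field_simps add.commute)
  qed
  have lo: "A * (1 + \<tau>) * (u - Cp) powr (\<tau> + 1) / (u - Cm) \<le> S u"
  proof -
    have "(1+\<tau>) * (A * (u - Cp) powr (1+\<tau>)) \<le> (u - Cm) * S u"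
      using k1(2) A(2)[OF u] tp by (meson mult_left_mono less_imp_le order_trans)
    then show ?thesis using u0 by (simp add: pos_divide_le_eq field_simps add.commute)
  qed
  have r1: "C_f f \<tau> / \<tau> * u powr \<tau> * (1 - Cp / u) powr (\<tau> + 1) / (1 - Cm / u)
      = A * (1 + \<tau>) * (u - Cp) powr (\<tau> + 1) / (u - Cm)"
    using alg[of u Cp Cm "C_f f \<tau>" \<tau>] u0 C by simp
  have r2: "C_f f \<tau> / \<tau> * u powr \<tau> * (1 - Cm / u) powr (\<tau> + 1) / (1 - Cp / u)
      = A * (1 + \<tau>) * (u - Cm) powr (\<tau> + 1) / (u - Cp)"
    using alg[of u Cm Cp "C_f f \<tau>" \<tau>] u0 C by simp
  show "C_f f \<tau> / \<tau> * ln x powr \<tau> * (1 - Cp / ln x) powr (\<tau> + 1) / (1 - Cm / ln x)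
       \<le> mu_f f x
     \<and> mu_f f x \<le>
     C_f f \<tau> / \<tau> * ln x powr \<tau> * (1 - Cm / ln x) powr (\<tau> + 1) / (1 - Cp / ln x)"
    unfolding u_def[symmetric] mu r1 r2 using up lo by simp
qed

end
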